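(* Let $i\ge 1$ be an integer and $k\ge 10i+15$. Let $H$ be a weighted graph with edge weight $\omega:E(H)\to\{3,4,5\}$ which contains no cycle of odd weight smaller than $2k+1$. If $P$ is a path in $H$ of minimal weight among all paths between its two end-vertices, then $N^i[P]$ is weighted bipartite.
   Context: The weight of a subgraph is the sum of the weights of its edges. $N^i[P]$ is the closed unweighted $i$-th neighbourhood of $V(P)$: the set of vertices at (unweighted) graph distance at most $i$ from some vertex of $P$. A vertex set $S$ is weighted bipartite if the induced subgraph $H[S]$ contains no cycle of odd weight. *)

theory Defs
  imports Main
begin

definition simple_graph :: "'a set \<Rightarrow> ('a \<Rightarrow> 'a \<Rightarrow> bool) \<Rightarrow> bool" where
  "simple_graph V E \<longleftrightarrow> finite V \<and>
     (\<forall>u v. E u v \<longrightarrow> u \<in> V \<and> v \<in> V \<and> u \<noteq> v \<and> E v u)"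

definition is_path :: "'a set \<Rightarrow> ('a \<Rightarrow> 'a \<Rightarrow> bool) \<Rightarrow> 'a list \<Rightarrow> bool" where
  "is_path S E p \<longleftrightarrow> p \<noteq> [] \<and> distinct p \<and> set p \<subseteq> S \<and>
     (\<forall>j. Suc j < length p \<longrightarrow> E (p ! j) (p ! Suc j))"

definition is_cycle :: "'a set \<Rightarrow> ('a \<Rightarrow> 'a \<Rightarrow> bool) \<Rightarrow> 'a list \<Rightarrow> bool" where
  "is_cycle S E c \<longleftrightarrow> length c \<ge> 3 \<and> distinct c \<and> set c \<subseteq> S \<and>
     (\<forall>j. Suc j < length c \<longrightarrow> E (c ! j) (c ! Suc j)) \<and> E (last c) (hd c)"

definition path_weight :: "('a \<Rightarrow> 'a \<Rightarrow> nat) \<Rightarrow> 'a list \<Rightarrow> nat" where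
  "path_weight w p = sum_list (map (\<lambda>(u, v). w u v) (zip p (tl p)))"

definition cycle_weight :: "('a \<Rightarrow> 'a \<Rightarrow> nat) \<Rightarrow> 'a list \<Rightarrow> nat" where
  "cycle_weight w c = path_weight w c + w (last c) (hd c)"

definition closed_nbhd :: "'a set \<Rightarrow> ('a \<Rightarrow> 'a \<Rightarrow> bool) \<Rightarrow> nat \<Rightarrow> 'a set \<Rightarrow> 'a set" where
  "closed_nbhd V E i T = {x \<in> V. \<exists>q. is_path V E q \<and> hd q = x \<and> last q \<in> T \<and> length q \<le> Suc i}"

definition weighted_bipartite :: "('a \<Rightarrow> 'a \<Rightarrow> bool) \<Rightarrow> ('a \<Rightarrow> 'a \<Rightarrow> nat) \<Rightarrow> 'a set \<Rightarrow> bool" where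
  "weighted_bipartite E w S \<longleftrightarrow> \<not> (\<exists>c. is_cycle S E c \<and> odd (cycle_weight w c))"

end

theory Submission imports Defs begin

fun walk :: "('a \<Rightarrow> 'a \<Rightarrow> bool) \<Rightarrow> 'a list \<Rightarrow> bool" where
  "walk E [] = True"
| "walk E (x # ys) = (walk E ys \<and> (ys \<noteq> [] \<longrightarrow> E x (hd ys)))"

lemma walk_iff: "walk E xs \<longleftrightarrow> (\<forall>j. Suc j < length xs \<longrightarrow> E (xs ! j) (xs ! Suc j))"
proof (induction xs)
  case Nil then show ?case by simp
next
  case (Cons x ys)
  show ?case
  proof (cases ys)
    case Nil then show ?thesis by simp
  next
    case (Cons y zs)
    show ?thesis using Cons.IH Cons
      by (auto simp: nth_Cons' less_Suc_eq_0_disj)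
  qed
qed

lemma walk_append: "walk E (xs @ ys) \<longleftrightarrow> walk E xs \<and> walk E ys \<and> (xs \<noteq> [] \<and> ys \<noteq> [] \<longrightarrow> E (last xs) (hd ys))"
  by (induction xs) auto

lemma pw_Cons: "path_weight w (x # ys) = (if ys = [] then 0 else w x (hd ys) + path_weight w ys)"
  by (cases ys) (auto simp: path_weight_def)

lemma pw_Nil[simp]: "path_weight w [] = 0"
  by (simp add: path_weight_def)

lemma pw_append: "path_weight w (xs @ ys) = path_weight w xs + path_weight w ys + (if xs \<noteq> [] \<and> ys \<noteq> [] then w (last xs) (hd ys) else 0)"
  by (induction xs) (auto simp: pw_Cons)

lemma walk_app_tl: "xs \<noteq> [] \<Longrightarrow> ys \<noteq> [] \<Longrightarrow> last xs = hd ys \<Longrightarrow> walk E (xs @ tl ys) \<longleftrightarrow> walk E xs \<and> walk E ys"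
  by (cases ys) (auto simp: walk_append)

lemma pw_app_tl: "xs \<noteq> [] \<Longrightarrow> ys \<noteq> [] \<Longrightarrow> last xs = hd ys \<Longrightarrow> path_weight w (xs @ tl ys) = path_weight w xs + path_weight w ys"
  by (cases ys) (auto simp: pw_append pw_Cons)

lemma last_app_tl: "xs \<noteq> [] \<Longrightarrow> ys \<noteq> [] \<Longrightarrow> last xs = hd ys \<Longrightarrow> last (xs @ tl ys) = last ys"
  by (cases ys) auto

lemma walk_rev: "(\<And>u v. E u v \<Longrightarrow> E v u) \<Longrightarrow> walk E xs \<Longrightarrow> walk E (rev xs)"
  by (induction xs) (auto simp: walk_append last_rev)

lemma pw_rev:
  assumes ws: "\<And>u v. E u v \<Longrightarrow> w u v = w v u"
  shows "walk E xs \<Longrightarrow> path_weight w (rev xs) = path_weight w xs"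
proof (induction xs)
  case Nil then show ?case by simp
next
  case (Cons a xs)
  then show ?case using ws by (cases xs) (auto simp: pw_append pw_Cons last_rev hd_rev)
qed

lemma pw_bound: "(\<And>u v. E u v \<Longrightarrow> w u v \<le> 5) \<Longrightarrow> walk E xs \<Longrightarrow> path_weight w xs \<le> 5 * (length xs - 1)"
proof (induction xs)
  case Nil then show ?case by simp
next
  case (Cons x ys)
  then show ?case by (cases ys) (auto simp: pw_Cons, fastforce)
qed

lemma walk_take: "walk E xs \<Longrightarrow> walk E (take n xs)"
  by (auto simp: walk_iff)

lemma walk_drop: "walk E xs \<Longrightarrow> walk E (drop n xs)"
  by (auto simp: walk_iff)

lemma walk_to_path:
  "walk E xs \<Longrightarrow> xs \<noteq> [] \<Longrightarrow> set xs \<subseteq> V \<Longrightarrow>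
   \<exists>p. is_path V E p \<and> hd p = hd xs \<and> last p = last xs \<and> path_weight w p \<le> path_weight w xs"
proof (induction "length xs" arbitrary: xs rule: less_induct)
  case less
  show ?case
  proof (cases "distinct xs")
    case True
    then show ?thesis using less.prems by (auto simp: is_path_def walk_iff[symmetric])
  next
    case False
    then obtain a x b c where xs: "xs = a @ [x] @ b @ [x] @ c" using not_distinct_decomp by blast
    let ?ys = "a @ x # c"
    have "length ?ys < length xs" using xs by simp
    moreover have "walk E ?ys" using less.prems(1) xs by (auto simp: walk_append)
    moreover have "?ys \<noteq> []" "set ?ys \<subseteq> V" using less.prems xs by auto
    ultimately obtain p where p: "is_path V E p" "hd p = hd ?ys" "last p = last ?ys" "path_weight w p \<le> path_weight w ?ys"
      using less.hyps by blast
    have "hd ?ys = hd xs" using xs by (cases a) auto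
    moreover have "last ?ys = last xs" using xs by (cases c) auto
    moreover have "path_weight w ?ys \<le> path_weight w xs" using xs by (auto simp: pw_append pw_Cons)
    ultimately show ?thesis using p by auto
  qed
qed

lemma closed_walk_odd:
  assumes sg: "simple_graph V E" and ws: "\<And>u v. E u v \<Longrightarrow> w u v = w v u"
    and cyc: "\<forall>c. is_cycle V E c \<and> odd (cycle_weight w c) \<longrightarrow> cycle_weight w c \<ge> B"
  shows "walk E c \<Longrightarrow> c \<noteq> [] \<Longrightarrow> set c \<subseteq> V \<Longrightarrow> E (last c) (hd c) \<Longrightarrow> odd (cycle_weight w c) \<Longrightarrow> cycle_weight w c \<ge> B"
proof (induction "length c" arbitrary: c rule: less_induct)
  case less
  have irr: "\<And>u. \<not> E u u" using sg by (auto simp: simple_graph_def)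
  show ?case
  proof (cases "distinct c")
    case True
    show ?thesis
    proof (cases "length c \<ge> 3")
      case True
      then have "is_cycle V E c" using less.prems \<open>distinct c\<close> by (auto simp: is_cycle_def walk_iff[symmetric])
      then show ?thesis using cyc less.prems by blast
    next
      case False
      then consider "length c = 1" | "length c = 2" using less.prems(2)
        by (cases "length c") (auto, linarith)
      then show ?thesis
      proof cases
        case 1
        then obtain x where "c = [x]" by (metis One_nat_def length_0_conv length_Suc_conv)
        then show ?thesis using less.prems irr by auto
      next
        case 2
        then obtain x y where c: "c = [x, y]" by (metis One_nat_def Suc_1 length_0_conv length_Suc_conv)
        then have "cycle_weight w c = 2 * w x y" using less.prems ws
          by (auto simp: cycle_weight_def pw_Cons)
        then show ?thesis using less.prems by simp
      qed
    qed
  next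
    case False
    then obtain a x b d where c: "c = a @ [x] @ b @ [x] @ d" using not_distinct_decomp by blast
    have bne: "b \<noteq> []" using less.prems(1) c irr by (auto simp: walk_append)
    let ?c1 = "a @ x # d" and ?c2 = "x # b"
    have hd1: "hd ?c1 = hd c" using c by (cases a) auto
    have last1: "last ?c1 = last c" using c by (cases d) auto
    have w1: "walk E ?c1" "walk E ?c2" using less.prems(1) c by (auto simp: walk_append)
    have e2: "E (last ?c2) (hd ?c2)" using less.prems(1) c bne by (auto simp: walk_append)
    have sum: "cycle_weight w c = cycle_weight w ?c1 + cycle_weight w ?c2"
      using c bne hd1 last1 by (auto simp: cycle_weight_def pw_append pw_Cons)
    have "odd (cycle_weight w ?c1) \<or> odd (cycle_weight w ?c2)" using sum less.prems(5) by auto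
    then show ?thesis
    proof
      assume o: "odd (cycle_weight w ?c1)"
      have "cycle_weight w ?c1 \<ge> B"
        apply (rule less.hyps) using c w1 hd1 last1 less.prems o by auto
      then show ?thesis using sum by linarith
    next
      assume o: "odd (cycle_weight w ?c2)"
      have "cycle_weight w ?c2 \<ge> B"
        apply (rule less.hyps) using c w1 e2 less.prems o by auto
      then show ?thesis using sum by linarith
    qed
  qed
qed

lemma in_set_tlD: "x \<in> set (tl xs) \<Longrightarrow> x \<in> set xs"
  by (cases xs) auto

lemma par_aux: "even a \<Longrightarrow> even b \<Longrightarrow> X + 2 * c = a + b \<Longrightarrow> even (X::nat)"
  by presburger

theorem lemma4p2:
  fixes V :: "'a set" and E :: "'a \<Rightarrow> 'a \<Rightarrow> bool" and w :: "'a \<Rightarrow> 'a \<Rightarrow> nat"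
    and i k :: nat and P :: "'a list"
  assumes "i \<ge> 1" and "k \<ge> 10 * i + 15"
    and "simple_graph V E"
    and "\<forall>u v. E u v \<longrightarrow> w u v \<in> {3, 4, 5} \<and> w u v = w v u"
    and "\<forall>c. is_cycle V E c \<and> odd (cycle_weight w c) \<longrightarrow> cycle_weight w c \<ge> 2 * k + 1"
    and "is_path V E P"
    and "\<forall>Q. is_path V E Q \<and> hd Q = hd P \<and> last Q = last P \<longrightarrow> path_weight w P \<le> path_weight w Q"
  shows "weighted_bipartite E w (closed_nbhd V E i (set P))"
proof -
  define S where "S = closed_nbhd V E i (set P)"
  have Es: "\<And>u v. E u v \<Longrightarrow> E v u" and EV: "\<And>u v. E u v \<Longrightarrow> u \<in> V \<and> v \<in> V"
    using assms(3) by (auto simp: simple_graph_def)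
  have ws: "\<And>u v. E u v \<Longrightarrow> w u v = w v u"
    using assms(4) by auto
  have w345: "w u v \<in> {3,4,5}" if "E u v" for u v using assms(4) that by blast
  have w5: "\<And>u v. E u v \<Longrightarrow> w u v \<le> 5"
    using w345 by force
  have Pw: "walk E P" "P \<noteq> []" "set P \<subseteq> V"
    using assms(6) by (auto simp: is_path_def walk_iff)
  have SV: "S \<subseteq> V" by (auto simp: S_def closed_nbhd_def)
  have "\<forall>x\<in>S. \<exists>R. walk E R \<and> R \<noteq> [] \<and> set R \<subseteq> V \<and> hd R = x \<and> length R \<le> Suc i \<and> (\<exists>j. j < length P \<and> P ! j = last R)"
    by (auto simp: S_def closed_nbhd_def is_path_def walk_iff in_set_conv_nth)
  then obtain R where R0: "\<forall>x\<in>S. walk E (R x) \<and> R x \<noteq> [] \<and> set (R x) \<subseteq> V \<and> hd (R x) = x \<and> length (R x) \<le> Suc i \<and> (\<exists>j. j < length P \<and> P ! j = last (R x))"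
    by (rule bchoice[THEN exE]) blast
  then obtain J where RJ: "\<And>x. x\<in>S \<Longrightarrow> walk E (R x) \<and> R x \<noteq> [] \<and> set (R x) \<subseteq> V \<and> hd (R x) = x \<and> length (R x) \<le> Suc i \<and> J x < length P \<and> P ! J x = last (R x)"
  proof -
    assume h: "\<And>J. (\<And>x. x\<in>S \<Longrightarrow> walk E (R x) \<and> R x \<noteq> [] \<and> set (R x) \<subseteq> V \<and> hd (R x) = x \<and> length (R x) \<le> Suc i \<and> J x < length P \<and> P ! J x = last (R x)) \<Longrightarrow> thesis"
    show thesis
      apply (rule h[of "\<lambda>x. SOME j. j < length P \<and> P ! j = last (R x)"])
      by (metis (mono_tags, lifting) someI_ex R0)
  qed
  have Rb: "path_weight w (R x) \<le> 5 * i" if "x \<in> S" for x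
  proof -
    have "path_weight w (R x) \<le> 5 * (length (R x) - 1)" using pw_bound[where E=E and w=w and xs="R x", OF w5] RJ[of x] that by simp
    also have "\<dots> \<le> 5 * i" using RJ[OF that] by auto
    finally show ?thesis .
  qed
  define d where "d j = path_weight w (take (Suc j) P)" for j
  define f where "f x = path_weight w (R x) + d (J x)" for x
  have key: "even (w x y + f x + f y)" if xS: "x \<in> S" and yS: "y \<in> S" and exy: "E x y" and pq: "J x \<le> J y" for x y
  proof -
    define p where "p = J x"
    define q where "q = J y"
    note Rx = RJ[OF xS, folded p_def] and Ry = RJ[OF yS, folded q_def]
    have pq': "p \<le> q" "q < length P" using pq Ry by (auto simp: p_def q_def)
    define seg where "seg = drop p (take (Suc q) P)"
    have seg1: "seg \<noteq> []" "hd seg = P ! p" "walk E seg" "set seg \<subseteq> V"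
      using pq' Pw unfolding seg_def
      by (auto simp: hd_drop_conv_nth walk_drop walk_take dest: in_set_dropD in_set_takeD)
    have seg2: "last seg = P ! q"
      using pq' unfolding seg_def by (simp add: take_Suc_conv_app_nth)
    note seg = seg1 seg2
    have ltp: "last (take (Suc p) P) = P ! p" "take (Suc p) P \<noteq> []"
      using pq' Pw by (auto simp: take_Suc_conv_app_nth)
    have ltq: "last (take (Suc q) P) = P ! q" "take (Suc q) P \<noteq> []"
      using pq' Pw by (auto simp: take_Suc_conv_app_nth)
    have takeq: "take (Suc q) P = take (Suc p) P @ tl seg"
    proof -
      have a: "tl seg = drop (Suc p) (take (Suc q) P)" unfolding seg_def by (simp add: drop_Suc tl_drop)
      have b: "take (Suc p) (take (Suc q) P) = take (Suc p) P" using pq' by (simp add: min_def)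
      show ?thesis unfolding a by (metis b append_take_drop_id)
    qed
    have dq: "d q = d p + path_weight w seg"
      unfolding d_def takeq by (rule pw_app_tl) (use ltp seg in auto)
    have dropq: "drop q P \<noteq> []" "hd (drop q P) = P ! q" "last (drop q P) = last P"
      using pq' by (auto simp: hd_drop_conv_nth)
    have Ptot: "P = take (Suc q) P @ tl (drop q P)"
      by (metis append_take_drop_id drop_Suc tl_drop)
    have pwP: "path_weight w P = d q + path_weight w (drop q P)"
    proof -
      have "path_weight w P = path_weight w (take (Suc q) P @ tl (drop q P))"
        using arg_cong[OF Ptot, of "path_weight w"] .
      also have "\<dots> = d q + path_weight w (drop q P)"
        unfolding d_def by (rule pw_app_tl) (use ltq dropq in auto)
      finally show ?thesis .
    qed
    define M where "M = rev (R x) @ R y"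
    have M: "walk E M" "M \<noteq> []" "hd M = P ! p" "last M = P ! q" "set M \<subseteq> V"
      "path_weight w M = path_weight w (R x) + path_weight w (R y) + w x y"
      using Rx Ry exy unfolding M_def
      by (auto simp: walk_append walk_rev[OF Es] pw_append pw_rev[OF ws] last_rev hd_rev)
    define M2 where "M2 = M @ tl (drop q P)"
    have M2: "walk E M2" "M2 \<noteq> []" "hd M2 = P ! p" "last M2 = last P" "set M2 \<subseteq> V"
      "path_weight w M2 = path_weight w M + path_weight w (drop q P)"
      unfolding M2_def
      using M dropq walk_app_tl[of M "drop q P" E] pw_app_tl[of M "drop q P" w] last_app_tl[of M "drop q P"]
        walk_drop[OF Pw(1), of q] Pw(3)
      by (auto dest: in_set_tlD in_set_dropD)
    define Q0 where "Q0 = take (Suc p) P @ tl M2"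
    have Q0: "walk E Q0" "Q0 \<noteq> []" "hd Q0 = hd P" "last Q0 = last P" "set Q0 \<subseteq> V"
      "path_weight w Q0 = d p + path_weight w M2"
      unfolding Q0_def d_def
      using M2 ltp walk_app_tl[of "take (Suc p) P" M2 E] pw_app_tl[of "take (Suc p) P" M2 w]
        last_app_tl[of "take (Suc p) P" M2] walk_take[OF Pw(1), of "Suc p"] Pw(3) Pw(2)
      by (auto dest: in_set_tlD in_set_takeD)
    obtain Q where Q: "is_path V E Q" "hd Q = hd P" "last Q = last P" "path_weight w Q \<le> path_weight w Q0"
      using walk_to_path[OF Q0(1,2,5), of w] Q0(3,4) by auto
    have "path_weight w P \<le> path_weight w Q" using assms(7) Q by blast
    then have segb: "path_weight w seg \<le> path_weight w M"
      using Q(4) Q0(6) M2(6) pwP dq by linarith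
    define A where "A = R x @ tl seg"
    have A: "walk E A" "A \<noteq> []" "hd A = x" "last A = P ! q" "set A \<subseteq> V"
      "path_weight w A = path_weight w (R x) + path_weight w seg"
      unfolding A_def
      using Rx seg walk_app_tl[of "R x" seg E] pw_app_tl[of "R x" seg w] last_app_tl[of "R x" seg]
      by (auto dest: in_set_tlD)
    define C where "C = A @ tl (rev (R y))"
    have tlr: "set (tl (rev (R y))) \<subseteq> V"
    proof -
      have "set (tl (rev (R y))) \<subseteq> set (rev (R y))" by (cases "rev (R y)") auto
      then show ?thesis using Ry by auto
    qed
    have C: "walk E C" "C \<noteq> []" "hd C = x" "last C = y" "set C \<subseteq> V"
      "path_weight w C = path_weight w A + path_weight w (R y)"
      unfolding C_def
      using A Ry walk_app_tl[of A "rev (R y)" E] pw_app_tl[of A "rev (R y)" w] last_app_tl[of A "rev (R y)"]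
        walk_rev[where E=E and xs="R y", OF Es] pw_rev[where E=E and w=w and xs="R y", OF ws] tlr
      by (auto simp: hd_rev last_rev dest: in_set_tlD)
    have cwC: "cycle_weight w C = path_weight w C + w x y"
      using C ws[OF exy] by (simp add: cycle_weight_def)
    have "cycle_weight w C \<le> 20 * i + 10"
      using cwC C(6) A(6) segb M(6) Rb[OF xS] Rb[OF yS] w5[OF exy] by linarith
    then have "\<not> cycle_weight w C \<ge> 2 * k + 1" using assms(2) by linarith
    then have evC: "even (cycle_weight w C)"
      using closed_walk_odd[OF assms(3) ws assms(5) C(1,2,5)] C(3,4) Es[OF exy] by auto
    have "w x y + f x + f y = cycle_weight w C + 2 * d p"
      unfolding f_def using cwC C(6) A(6) dq by (simp add: p_def q_def)
    then show ?thesis using evC by simp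
  qed
  have key2: "even (w x y + f x + f y)" if xS: "x \<in> S" and yS: "y \<in> S" and exy: "E x y" for x y
  proof (cases "J x \<le> J y")
    case True then show ?thesis using key that by blast
  next
    case False
    then have "even (w y x + f y + f x)" using key[OF yS xS Es[OF exy]] by simp
    then show ?thesis using ws[OF exy] by (simp add: add.commute add.left_commute)
  qed
  have walkpar: "walk E c \<Longrightarrow> c \<noteq> [] \<Longrightarrow> set c \<subseteq> S \<Longrightarrow> even (path_weight w c + f (hd c) + f (last c))" for c
  proof (induction c)
    case Nil then show ?case by simp
  next
    case (Cons x ys)
    show ?case
    proof (cases "ys = []")
      case True then show ?thesis by (simp add: pw_Cons)
    next
      case False
      have h1: "even (path_weight w ys + f (hd ys) + f (last ys))" using Cons False by simp
      have h2: "even (w x (hd ys) + f x + f (hd ys))" using Cons.prems False hd_in_set[OF False] by (intro key2) auto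
      have "path_weight w (x # ys) + f (hd (x # ys)) + f (last (x # ys)) + 2 * f (hd ys)
         = (path_weight w ys + f (hd ys) + f (last ys)) + (w x (hd ys) + f x + f (hd ys))"
        using False by (simp add: pw_Cons)
      then show ?thesis using h1 h2 par_aux by blast
    qed
  qed
  show ?thesis unfolding weighted_bipartite_def S_def[symmetric]
  proof (rule notI, elim exE conjE)
    fix c assume cyc: "is_cycle S E c" and odd: "odd (cycle_weight w c)"
    have c: "walk E c" "c \<noteq> []" "set c \<subseteq> S" "E (last c) (hd c)"
      using cyc by (auto simp: is_cycle_def walk_iff)
    have "hd c \<in> S" "last c \<in> S" using c by auto
    then have e1: "even (w (last c) (hd c) + f (last c) + f (hd c))" using key2 c(4) by blast
    have e2: "even (path_weight w c + f (hd c) + f (last c))" using walkpar c(1,2,3) .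
    have "cycle_weight w c + 2 * (f (hd c) + f (last c)) = (path_weight w c + f (hd c) + f (last c)) + (w (last c) (hd c) + f (last c) + f (hd c))"
      by (simp add: cycle_weight_def)
    then have "even (cycle_weight w c)" using e1 e2 par_aux by blast
    then show False using odd by simp
  qed
qed

end
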